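(* Let $A$ be a conservative $d$-dim Petri net. For every configuration $x$ of $A$, the reachability set $R(x)=\{y\mid x\xrightarrow{*}y\}$ is finite and contains a bottom SCC $X\subseteq R(x)$. If, moreover, $A$ is structurally live, then $A$ is reversible.
   Context: A $d$-dim Petri net $A$ is a finite set of actions $a=(a_-,a_+)\in\mathbb{N}^d\times\mathbb{N}^d$; configurations are $x\in\mathbb{N}^d$; $x\xrightarrow{a}y$ if $x=c+a_-$, $y=c+a_+$ for some $c\in\mathbb{N}^d$; $\xrightarrow{*}$ is the reflexive-transitive closure. $\Delta(a)=a_+-a_-$. $A$ is conservative if some $w\in(\mathbb{N}_+)^d$ satisfies $\langle\Delta(a),w\rangle=0$ for all $a\in A$. A bottom SCC of $A$ is a nonempty set $X$ of configurations such that $\{y\mid x\xrightarrow{*}y\}=X$ for every $x\in X$. A configuration $x$ is live if for every $a\in A$ and every $x'$ with $x\xrightarrow{*}x'$ there is $y$ with $x'\xrightarrow{*}y\geq a_-$; $A$ is structurally live if it has a live configuration. $A$ is reversible if $-\Delta(a)$ belongs to the set of finite sums of elements of $\{\Delta(b)\mid b\in A\}$ for every $a\in A$. *)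

theory Defs
  imports Main
begin

text \<open>Dimension d is a finite type 'd; configurations are vectors 'd \<Rightarrow> nat;
  an action is a pair (a_minus, a_plus); a Petri net is a finite set of actions.\<close>

type_synonym 'd config = "'d \<Rightarrow> nat"
type_synonym 'd action = "'d config \<times> 'd config"

definition step :: "'d action \<Rightarrow> 'd config \<Rightarrow> 'd config \<Rightarrow> bool" where
  "step a x y \<longleftrightarrow> (\<exists>c. x = (\<lambda>i. c i + fst a i) \<and> y = (\<lambda>i. c i + snd a i))"

definition step_net :: "'d action set \<Rightarrow> 'd config \<Rightarrow> 'd config \<Rightarrow> bool" where
  "step_net A x y \<longleftrightarrow> (\<exists>a\<in>A. step a x y)"

definition reach :: "'d action set \<Rightarrow> 'd config \<Rightarrow> 'd config \<Rightarrow> bool" where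
  "reach A = (step_net A)\<^sup>*\<^sup>*"

definition reach_set :: "'d action set \<Rightarrow> 'd config \<Rightarrow> 'd config set" where
  "reach_set A x = {y. reach A x y}"

definition delta :: "'d action \<Rightarrow> 'd \<Rightarrow> int" where
  "delta a = (\<lambda>i. int (snd a i) - int (fst a i))"

definition conservative :: "('d::finite) action set \<Rightarrow> bool" where
  "conservative A \<longleftrightarrow> (\<exists>w :: 'd \<Rightarrow> nat. (\<forall>i. w i > 0) \<and>
      (\<forall>a\<in>A. (\<Sum>i\<in>UNIV. delta a i * int (w i)) = 0))"

definition bottom_scc :: "'d action set \<Rightarrow> 'd config set \<Rightarrow> bool" where
  "bottom_scc A X \<longleftrightarrow> X \<noteq> {} \<and> (\<forall>x\<in>X. reach_set A x = X)"

definition live :: "'d action set \<Rightarrow> 'd config \<Rightarrow> bool" where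
  "live A x \<longleftrightarrow> (\<forall>a\<in>A. \<forall>x'. reach A x x' \<longrightarrow> (\<exists>y. reach A x' y \<and> fst a \<le> y))"

definition structurally_live :: "'d action set \<Rightarrow> bool" where
  "structurally_live A \<longleftrightarrow> (\<exists>x. live A x)"

inductive_set finite_sums :: "('d \<Rightarrow> int) set \<Rightarrow> ('d \<Rightarrow> int) set" for S where
  zero: "(\<lambda>_. 0) \<in> finite_sums S"
| add: "s \<in> S \<Longrightarrow> t \<in> finite_sums S \<Longrightarrow> (\<lambda>i. s i + t i) \<in> finite_sums S"

definition reversible :: "'d action set \<Rightarrow> bool" where
  "reversible A \<longleftrightarrow> (\<forall>a\<in>A. (\<lambda>i. - delta a i) \<in> finite_sums (delta ` A))"

end

theory Submission
  imports Defs "HOL-Library.FuncSet"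
begin

lemma reach_delta:
  assumes "reach A u v"
  shows "(\<lambda>i. int (v i) - int (u i)) \<in> finite_sums (delta ` A)"
  using assms unfolding reach_def
proof (induction rule: converse_rtranclp_induct)
  case base
  then show ?case using finite_sums.zero by simp
next
  case (step u w)
  then obtain a c where a: "a \<in> A" and u: "u = (\<lambda>i. c i + fst a i)"
      and w: "w = (\<lambda>i. c i + snd a i)"
    unfolding step_net_def step_def by blast
  have "(\<lambda>i. delta a i + (int (v i) - int (w i))) \<in> finite_sums (delta ` A)"
    using finite_sums.add[OF imageI[OF a] step.IH] by simp
  moreover have "(\<lambda>i. delta a i + (int (v i) - int (w i))) = (\<lambda>i. int (v i) - int (u i))"
    using u w by (auto simp: delta_def)
  ultimately show ?case by simp
qed

lemma reach_weight:
  assumes "\<forall>a\<in>A. (\<Sum>i\<in>UNIV. delta a i * int (w i)) = 0" and "reach A u v"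
  shows "(\<Sum>i\<in>(UNIV::('d::finite) set). int (w i) * int (v i)) = (\<Sum>i\<in>UNIV. int (w i) * int (u i))"
  using assms(2) unfolding reach_def
proof (induction rule: rtranclp_induct)
  case base
  then show ?case by simp
next
  case (step v z)
  then obtain a c where a: "a \<in> A" and v: "v = (\<lambda>i. c i + fst a i)"
      and z: "z = (\<lambda>i. c i + snd a i)"
    unfolding step_net_def step_def by blast
  have "(\<Sum>i\<in>UNIV. int (w i) * int (z i)) - (\<Sum>i\<in>UNIV. int (w i) * int (v i))
      = (\<Sum>i\<in>UNIV. delta a i * int (w i))"
    unfolding sum_subtractf[symmetric] using v z
    by (intro sum.cong) (auto simp: delta_def algebra_simps)
  also have "\<dots> = 0" using assms(1) a by blast
  finally show ?case using step.IH by simp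
qed

theorem proposition7:
  fixes A :: "('d::finite) action set"
  assumes "finite A" and "conservative A"
  shows "(\<forall>x. finite (reach_set A x) \<and> (\<exists>X. bottom_scc A X \<and> X \<subseteq> reach_set A x))
         \<and> (structurally_live A \<longrightarrow> reversible A)"
proof -
  obtain w :: "'d \<Rightarrow> nat" where wpos: "\<forall>i. w i > 0"
    and wc: "\<forall>a\<in>A. (\<Sum>i\<in>UNIV. delta a i * int (w i)) = 0"
    using assms(2) unfolding conservative_def by blast
  have fin: "finite (reach_set A x)" for x
  proof -
    define N where "N = (\<Sum>i\<in>(UNIV::'d set). w i * x i)"
    have "reach_set A x \<subseteq> PiE UNIV (\<lambda>_. {..N})"
    proof
      fix y assume "y \<in> reach_set A x"
      then have r: "reach A x y" by (simp add: reach_set_def)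
      have eq: "(\<Sum>i\<in>(UNIV::'d set). int (w i) * int (y i)) = (\<Sum>i\<in>UNIV. int (w i) * int (x i))"
        using reach_weight[OF wc r] .
      have eqn: "(\<Sum>i\<in>(UNIV::'d set). w i * y i) = N"
        proof -
        have "int (\<Sum>i\<in>(UNIV::'d set). w i * y i) = int (\<Sum>i\<in>(UNIV::'d set). w i * x i)"
          using eq by (simp add: of_nat_sum)
        then show ?thesis unfolding N_def by (simp only: of_nat_eq_iff)
      qed
      have "y i \<le> N" for i
      proof -
        have "y i \<le> w i * y i" using wpos by (simp add: Suc_le_eq)
        also have "\<dots> \<le> (\<Sum>i\<in>(UNIV::'d set). w i * y i)"
          by (rule member_le_sum) auto
        finally show ?thesis using eqn by simp
      qed
      then show "y \<in> PiE UNIV (\<lambda>_. {..N})" by auto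
    qed
    moreover have "finite (PiE (UNIV::'d set) (\<lambda>_. {..N}))"
      by (rule finite_PiE) auto
    ultimately show ?thesis by (rule finite_subset)
  qed
  have trans: "reach A u v \<Longrightarrow> reach A v z \<Longrightarrow> reach A u z" for u v z
    unfolding reach_def by simp
  have refl: "reach A u u" for u unfolding reach_def by simp
  have scc: "\<exists>X. bottom_scc A X \<and> X \<subseteq> reach_set A x" for x
  proof -
    obtain y where y: "y \<in> reach_set A x"
      and ymin: "\<And>z. z \<in> reach_set A x \<Longrightarrow> card (reach_set A y) \<le> card (reach_set A z)"
      using ex_has_least_nat[of "\<lambda>y. y \<in> reach_set A x" x "\<lambda>y. card (reach_set A y)"]
        refl by (auto simp: reach_set_def)
    have sub: "reach_set A z \<subseteq> reach_set A y" if "reach A y z" for z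
      using trans that by (auto simp: reach_set_def)
    have "bottom_scc A (reach_set A y)"
      unfolding bottom_scc_def
    proof (intro conjI ballI)
      show "reach_set A y \<noteq> {}" using refl by (auto simp: reach_set_def)
    next
      fix z assume z: "z \<in> reach_set A y"
      then have rz: "reach A y z" by (simp add: reach_set_def)
      have "z \<in> reach_set A x" using y rz trans by (auto simp: reach_set_def)
      then have "card (reach_set A y) \<le> card (reach_set A z)" by (rule ymin)
      then show "reach_set A z = reach_set A y"
        using card_seteq[OF fin sub[OF rz]] by simp
    qed
    moreover have "reach_set A y \<subseteq> reach_set A x"
      using y trans by (auto simp: reach_set_def)
    ultimately show ?thesis by blast
  qed
  have rev: "reversible A" if sl: "structurally_live A"
  proof -
    obtain x where lx: "live A x" using sl unfolding structurally_live_def by blast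
    obtain X where X: "bottom_scc A X" and Xs: "X \<subseteq> reach_set A x" using scc by blast
    obtain z where z: "z \<in> X" using X unfolding bottom_scc_def by blast
    show ?thesis unfolding reversible_def
    proof
      fix a assume a: "a \<in> A"
      have "reach A x z" using z Xs by (auto simp: reach_set_def)
      then obtain y where ry: "reach A z y" and ya: "fst a \<le> y"
        using lx a unfolding live_def by blast
      have yX: "y \<in> X" using X z ry unfolding bottom_scc_def reach_set_def by blast
      define c where "c = (\<lambda>i. y i - fst a i)"
      define y' where "y' = (\<lambda>i. c i + snd a i)"
      have yc: "y = (\<lambda>i. c i + fst a i)" using ya unfolding c_def le_fun_def by auto
      have "step a y y'" unfolding step_def y'_def using yc by blast
      then have "reach A y y'" unfolding reach_def step_net_def using a by blast
      then have "y' \<in> X" using X yX unfolding bottom_scc_def reach_set_def by blast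
      then have "reach A y' y" using X yX unfolding bottom_scc_def reach_set_def by blast
      from reach_delta[OF this]
      have "(\<lambda>i. int (y i) - int (y' i)) \<in> finite_sums (delta ` A)" .
      moreover have "(\<lambda>i. int (y i) - int (y' i)) = (\<lambda>i. - delta a i)"
        using yc unfolding y'_def delta_def by auto
      ultimately show "(\<lambda>i. - delta a i) \<in> finite_sums (delta ` A)" by simp
    qed
  qed
  show ?thesis using fin scc rev by blast
qed

end
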